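(* (a) For every $\varepsilon>0$ there is a single-item instance with two agents and SOS valuations such that every ex-post IC-IR mechanism (randomized, not necessarily universally) has, at some signal profile $\mathbf{s}$, expected welfare at most $(\tfrac12+\varepsilon)$ times the optimal welfare $\max_i v_i(\mathbf{s})$. (b) For every integer $m\ge3$ and $d=m^2$, there is a single-item instance with $n=m=\sqrt d$ agents and $d$-SOS valuations such that every ex-post IC-IR mechanism has, at some signal profile, expected welfare at most $\frac{2\sqrt d}{d}+o(1)$ times the optimal welfare; hence no such mechanism achieves an approximation ratio better than $\Omega(\sqrt d)$.
   Context: Single-item interdependent-value model: agents have private signals $s_j\ge0$ (an agent may have a trivial fixed signal), values $v_i(\mathbf{s})\ge0$ are public functions of the signal profile, weakly increasing in each coordinate. A (randomized) mechanism maps reports $\mathbf{s}$ to winning probabilities $x_i(\mathbf{s})$ with $\sum_i x_i(\mathbf{s})\le1$ and expected payments; it is ex-post IC iff $x_i(s_i,\mathbf{s}_{-i})$ is weakly increasing in $s_i$ for every $i$ and $\mathbf{s}_{-i}$. Expected welfare at $\mathbf{s}$ is $\sum_i x_i(\mathbf{s})v_i(\mathbf{s})$. $d$-SOS: for every coordinate $j$, $s_j\ge0$, $\delta\ge0$, and $\mathbf{s}'_{-j}\le\mathbf{s}_{-j}$ coordinate-wise, $d\big(v(\mathbf{s}'_{-j},s_j+\delta)-v(\mathbf{s}'_{-j},s_j)\big)\ge v(\mathbf{s}_{-j},s_j+\delta)-v(\mathbf{s}_{-j},s_j)$; SOS means $d=1$. *)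

theory Defs
  imports Complex_Main
begin

text \<open>Agents are 0,...,n-1. Agents in T have a trivial (fixed) signal, normalised to 0;
  all other agents have a private signal in [0,\<infinity>). Profiles are functions nat => real,
  set to 0 outside the agents.\<close>

definition profiles :: "nat \<Rightarrow> nat set \<Rightarrow> (nat \<Rightarrow> real) set" where
  "profiles n T = {s. \<forall>j. (j < n \<and> j \<notin> T \<longrightarrow> 0 \<le> s j) \<and>
                          (\<not> (j < n \<and> j \<notin> T) \<longrightarrow> s j = 0)}"

definition valid_values :: "nat \<Rightarrow> nat set \<Rightarrow> (nat \<Rightarrow> (nat \<Rightarrow> real) \<Rightarrow> real) \<Rightarrow> bool" where
  "valid_values n T v \<longleftrightarrow>
     (\<forall>i<n. \<forall>s\<in>profiles n T. 0 \<le> v i s) \<and>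
     (\<forall>i<n. \<forall>s\<in>profiles n T. \<forall>s'\<in>profiles n T. (\<forall>j. s j \<le> s' j) \<longrightarrow> v i s \<le> v i s')"

text \<open>d-SOS (SOS is d = 1).\<close>
definition d_SOS :: "real \<Rightarrow> nat \<Rightarrow> nat set \<Rightarrow> (nat \<Rightarrow> (nat \<Rightarrow> real) \<Rightarrow> real) \<Rightarrow> bool" where
  "d_SOS d n T v \<longleftrightarrow>
     (\<forall>i<n. \<forall>j<n. j \<notin> T \<longrightarrow>
        (\<forall>s\<in>profiles n T. \<forall>s'\<in>profiles n T. \<forall>\<delta>\<ge>0.
           (\<forall>k. k \<noteq> j \<longrightarrow> s' k \<le> s k) \<longrightarrow>
           d * (v i (s'(j := s j + \<delta>)) - v i (s'(j := s j)))
             \<ge> v i (s(j := s j + \<delta>)) - v i s))"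

text \<open>Ex-post IC-IR randomized mechanism, given by its allocation rule x s i
  (winning probability of agent i at reported profile s): feasible and
  weakly increasing in the agent's own signal (the ex-post IC characterisation).\<close>
definition ic_mechanism :: "nat \<Rightarrow> nat set \<Rightarrow> ((nat \<Rightarrow> real) \<Rightarrow> nat \<Rightarrow> real) \<Rightarrow> bool" where
  "ic_mechanism n T x \<longleftrightarrow>
     (\<forall>s\<in>profiles n T. (\<forall>i<n. 0 \<le> x s i) \<and> (\<Sum>i<n. x s i) \<le> 1) \<and>
     (\<forall>i<n. i \<notin> T \<longrightarrow> (\<forall>s\<in>profiles n T. \<forall>t. s i \<le> t \<longrightarrow> x s i \<le> x (s(i := t)) i))"

definition welfare :: "nat \<Rightarrow> ((nat \<Rightarrow> real) \<Rightarrow> nat \<Rightarrow> real) \<Rightarrow> (nat \<Rightarrow> (nat \<Rightarrow> real) \<Rightarrow> real) \<Rightarrow> (nat \<Rightarrow> real) \<Rightarrow> real" where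
  "welfare n x v s = (\<Sum>i<n. x s i * v i s)"

definition opt_welfare :: "nat \<Rightarrow> (nat \<Rightarrow> (nat \<Rightarrow> real) \<Rightarrow> real) \<Rightarrow> (nat \<Rightarrow> real) \<Rightarrow> real" where
  "opt_welfare n v s = Max ((\<lambda>i. v i s) ` {..<n})"

end

theory Submission
  imports Defs
begin

lemma sum_upd_in:
  assumes "finite A" "j \<in> A"
  shows "sum (s(j:=y)) A = sum s (A - {j}) + (y::real)"
proof -
  have "sum (s(j:=y)) A = (s(j:=y)) j + sum (s(j:=y)) (A - {j})"
    using assms by (simp add: sum.remove)
  also have "sum (s(j:=y)) (A - {j}) = sum s (A - {j})"
    by (rule sum.cong) auto
  finally show ?thesis by simp
qed

definition gg :: "real \<Rightarrow> real \<Rightarrow> real \<Rightarrow> real" where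
  "gg d c t = t + (d - 1) * max 0 (t - c)"

lemma gg_incr:
  assumes "d \<ge> 1" "\<delta> \<ge> 0"
  shows "gg d c (t + \<delta>) - gg d c t \<ge> \<delta>" "gg d c (t + \<delta>) - gg d c t \<le> d * \<delta>"
proof -
  have h1: "max 0 (t + \<delta> - c) - max 0 (t - c) \<ge> 0" using assms by simp
  have h2: "max 0 (t + \<delta> - c) - max 0 (t - c) \<le> \<delta>" using assms by simp
  have e: "gg d c (t + \<delta>) - gg d c t = \<delta> + (d - 1) * (max 0 (t + \<delta> - c) - max 0 (t - c))"
    unfolding gg_def by (simp add: algebra_simps)
  have "(d - 1) * (max 0 (t + \<delta> - c) - max 0 (t - c)) \<ge> 0" using assms h1 by simp
  then show "gg d c (t + \<delta>) - gg d c t \<ge> \<delta>" using e by simp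
  have "(d - 1) * (max 0 (t + \<delta> - c) - max 0 (t - c)) \<le> (d - 1) * \<delta>"
    using assms h2 by (intro mult_left_mono) auto
  then show "gg d c (t + \<delta>) - gg d c t \<le> d * \<delta>" using e by (simp add: algebra_simps)
qed

lemma gg_mono:
  assumes "d \<ge> 1" "t \<le> u"
  shows "gg d c t \<le> gg d c u"
  using gg_incr(1)[OF assms(1), of "u - t" c t] assms by simp

lemma gg_nonneg:
  assumes "d \<ge> 1" "t \<ge> 0"
  shows "gg d c t \<ge> 0"
  using assms unfolding gg_def by (simp add: mult_nonneg_nonneg)

lemma partA:
  fixes \<epsilon> :: real
  assumes "\<epsilon> > 0"
  shows "\<exists>T v. valid_values 2 T v \<and> d_SOS 1 2 T v \<and>
              (\<forall>x. ic_mechanism 2 T x \<longrightarrow>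
                 (\<exists>s\<in>profiles 2 T. opt_welfare 2 v s > 0 \<and>
                    welfare 2 x v s \<le> (1/2 + \<epsilon>) * opt_welfare 2 v s))"
proof -
  define H where "H = 1 + 1/\<epsilon>"
  have H1: "H \<ge> 1" using assms by (simp add: H_def)
  define v :: "nat \<Rightarrow> (nat \<Rightarrow> real) \<Rightarrow> real" where
    "v = (\<lambda>i s. if i = 0 then 1 else H * min (s 0) 1)"
  have two: "{..<2::nat} = {0,1}" by auto
  have vv: "valid_values 2 {1} v"
    unfolding valid_values_def
  proof (intro conjI allI impI ballI)
    fix i s s' assume "i < (2::nat)" "\<forall>j::nat. s j \<le> (s' j :: real)"
    then have "min (s 0) 1 \<le> min (s' 0) 1" by (meson min.mono order_refl)
    then show "v i s \<le> v i s'" unfolding v_def using H1 by (auto intro: mult_left_mono)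
  qed (use H1 in \<open>auto simp: v_def profiles_def\<close>)
  have sos: "d_SOS 1 2 {1} v"
    unfolding d_SOS_def v_def
  proof (intro allI impI ballI)
    fix i j :: nat and s s' :: "nat \<Rightarrow> real" and \<delta> :: real
    assume "j < 2" "j \<notin> {1}"
    then have "j = 0" by auto
    then show "1 * ((if i = 0 then 1 else H * min ((s'(j := s j + \<delta>)) 0) 1) -
              (if i = 0 then 1 else H * min ((s'(j := s j)) 0) 1))
             \<ge> (if i = 0 then 1 else H * min ((s(j := s j + \<delta>)) 0) 1) -
              (if i = 0 then 1 else H * min (s 0) 1)" by simp
  qed
  have mech: "\<exists>s\<in>profiles 2 {1}. opt_welfare 2 v s > 0 \<and>
                    welfare 2 x v s \<le> (1/2 + \<epsilon>) * opt_welfare 2 v s"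
    if ic: "ic_mechanism 2 {1} x" for x
  proof -
    define z :: "nat \<Rightarrow> real" where "z = (\<lambda>_. 0)"
    define p where "p = z(0 := 1)"
    have zp: "z \<in> profiles 2 {1}" unfolding z_def profiles_def by auto
    have pp: "p \<in> profiles 2 {1}" unfolding p_def z_def profiles_def by auto
    have mono: "x z 0 \<le> x p 0" using ic zp unfolding ic_mechanism_def p_def
      by (auto simp: z_def)
    have fz: "0 \<le> x z 0" "0 \<le> x z 1" "x z 0 + x z 1 \<le> 1"
      using ic zp unfolding ic_mechanism_def by (auto simp: two)
    have fp: "0 \<le> x p 0" "0 \<le> x p 1" "x p 0 + x p 1 \<le> 1"
      using ic pp unfolding ic_mechanism_def by (auto simp: two)
    have oz: "opt_welfare 2 v z = 1" unfolding opt_welfare_def v_def z_def two by simp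
    have wz: "welfare 2 x v z = x z 0" unfolding welfare_def v_def z_def two by simp
    have op: "opt_welfare 2 v p = H" unfolding opt_welfare_def v_def p_def z_def two
      using H1 by simp
    have wp: "welfare 2 x v p = x p 0 + x p 1 * H" unfolding welfare_def v_def p_def z_def two
      by simp
    show ?thesis
    proof (cases "x z 0 \<le> 1/2 + \<epsilon>")
      case True
      then show ?thesis using zp oz wz by (intro bexI[of _ z]) auto
    next
      case False
      then have q: "x p 0 > 1/2 + \<epsilon>" using mono by simp
      have "x p 1 * H \<le> (1 - x p 0) * H" using fp H1 by (intro mult_right_mono) auto
      then have "welfare 2 x v p \<le> H - x p 0 * (H - 1)" using wp by (simp add: algebra_simps)
      also have "\<dots> \<le> H - (1/2 + \<epsilon>) * (H - 1)"
        using q H1 by (intro diff_left_mono mult_right_mono) auto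
      also have "\<dots> \<le> (1/2 + \<epsilon>) * H"
        using assms by (simp add: H_def field_simps)
      finally show ?thesis using pp op H1 by (intro bexI[of _ p]) auto
    qed
  qed
  show ?thesis using vv sos mech by blast
qed


lemma partB:
  fixes m :: nat
  assumes m3: "m \<ge> 3"
  shows "\<exists>T v. valid_values m T v \<and> d_SOS (real (m^2)) m T v \<and>
                (\<forall>x. ic_mechanism m T x \<longrightarrow>
                   (\<exists>s\<in>profiles m T. opt_welfare m v s > 0 \<and>
                      welfare m x v s \<le> (2 * sqrt (real (m^2)) / real (m^2) + 0) * opt_welfare m v s))"
proof -
  define d :: real where "d = real (m^2)"
  define c :: real where "c = real m - 2"
  have d1: "d \<ge> 1" using m3 by (simp add: d_def)
  define v :: "nat \<Rightarrow> (nat \<Rightarrow> real) \<Rightarrow> real" where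
    "v = (\<lambda>i s. gg d c (\<Sum>j\<in>{..<m}-{i}. s j))"
  have prof: "s \<in> profiles m {} \<Longrightarrow> j < m \<Longrightarrow> 0 \<le> s j" for s j
    unfolding profiles_def by auto
  have vv: "valid_values m {} v"
    unfolding valid_values_def
  proof (intro conjI allI impI ballI)
    fix i s assume "i < m" "s \<in> profiles m {}"
    then show "0 \<le> v i s" unfolding v_def using prof d1
      by (intro gg_nonneg sum_nonneg) auto
  next
    fix i s s' assume "i < m" "\<forall>j::nat. s j \<le> (s' j :: real)"
    then show "v i s \<le> v i s'" unfolding v_def using d1
      by (intro gg_mono sum_mono) auto
  qed
  have sos: "d_SOS d m {} v"
    unfolding d_SOS_def
  proof (intro allI impI ballI)
    fix i j :: nat and s s' :: "nat \<Rightarrow> real" and \<delta> :: real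
    assume ij: "i < m" "j < m" and dl: "\<delta> \<ge> 0"
    show "d * (v i (s'(j := s j + \<delta>)) - v i (s'(j := s j))) \<ge> v i (s(j := s j + \<delta>)) - v i s"
    proof (cases "j = i")
      case True
      have e: "(\<Sum>l\<in>{..<m}-{i}. (f(j:=y)) l) = (\<Sum>l\<in>{..<m}-{i}. f l)" for f :: "nat \<Rightarrow> real" and y
        using True by (intro sum.cong) auto
      show ?thesis unfolding v_def e by simp
    next
      case False
      define A where "A = {..<m}-{i}"
      have jA: "j \<in> A" "finite A" using False ij by (auto simp: A_def)
      define t' where "t' = (\<Sum>l\<in>A-{j}. s' l) + s j"
      define t where "t = (\<Sum>l\<in>A-{j}. s l) + s j"
      have L: "v i (s'(j := s j + \<delta>)) - v i (s'(j := s j)) = gg d c (t' + \<delta>) - gg d c t'"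
        unfolding v_def A_def[symmetric] sum_upd_in[OF jA(2,1)] t'_def by (simp add: add.assoc)
      have "v i s = v i (s(j := s j))" by simp
      then have R: "v i (s(j := s j + \<delta>)) - v i s = gg d c (t + \<delta>) - gg d c t"
        unfolding v_def A_def[symmetric] sum_upd_in[OF jA(2,1)] t_def by (simp add: add.assoc)
      have "gg d c (t' + \<delta>) - gg d c t' \<ge> \<delta>" by (rule gg_incr(1)[OF d1 dl])
      then have "d * (gg d c (t' + \<delta>) - gg d c t') \<ge> d * \<delta>" using d1 by (intro mult_left_mono) auto
      moreover have "gg d c (t + \<delta>) - gg d c t \<le> d * \<delta>" by (rule gg_incr(2)[OF d1 dl])
      ultimately show ?thesis using L R by simp
    qed
  qed
  have mech: "\<exists>s\<in>profiles m {}. opt_welfare m v s > 0 \<and>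
                      welfare m x v s \<le> (2 * sqrt (real (m^2)) / real (m^2) + 0) * opt_welfare m v s"
    if ic: "ic_mechanism m {} x" for x
  proof -
    define one :: "nat \<Rightarrow> real" where "one = (\<lambda>j. if j < m then 1 else 0)"
    have op: "one \<in> profiles m {}" unfolding one_def profiles_def by auto
    have feas: "\<And>s. s \<in> profiles m {} \<Longrightarrow> (\<forall>i<m. 0 \<le> x s i) \<and> (\<Sum>i<m. x s i) \<le> 1"
      using ic unfolding ic_mechanism_def by blast
    obtain k where k: "k < m" "x one k \<le> 1 / real m"
    proof (rule ccontr)
      assume "\<not> thesis"
      then have "\<forall>k<m. x one k > 1 / real m" using that by force
      then have "(\<Sum>k<m. 1 / real m) < (\<Sum>k<m. x one k)"
        using m3 by (intro sum_strict_mono) (auto simp: lessThan_empty_iff)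
      moreover have "(\<Sum>k<m. 1 / real m) = 1" using m3 by simp
      ultimately show False using feas[OF op] by simp
    qed
    define p where "p = one(k := 0)"
    have pp: "p \<in> profiles m {}" unfolding p_def one_def profiles_def by auto
    have pk: "p(k := 1) = one" unfolding p_def one_def using k by auto
    have xk: "x p k \<le> 1 / real m"
      using ic pp k pk unfolding ic_mechanism_def
      by (metis (no_types, lifting) k(2) order_trans empty_iff fun_upd_same p_def zero_le_one)
    define Av where "Av = real m - 2 + d"
    define Bv where "Bv = real m - 2"
    have sumk: "(\<Sum>j\<in>{..<m}-{k}. p j) = real m - 1"
    proof -
      have "(\<Sum>j\<in>{..<m}-{k}. p j) = (\<Sum>j\<in>{..<m}-{k}. 1)"
        by (intro sum.cong) (auto simp: p_def one_def)
      then show ?thesis using k m3 by (simp add: of_nat_diff)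
    qed
    have sumi: "(\<Sum>j\<in>{..<m}-{i}. p j) = real m - 2" if "i < m" "i \<noteq> k" for i
    proof -
      have kA: "k \<in> {..<m}-{i}" "finite ({..<m}-{i})" using that k by auto
      have "(\<Sum>j\<in>{..<m}-{i}. p j) = (\<Sum>j\<in>{..<m}-{i}-{k}. one j) + 0"
        unfolding p_def sum_upd_in[OF kA(2,1)] ..
      also have "\<dots> = (\<Sum>j\<in>{..<m}-{i}-{k}. 1)" by (simp only: add_0_right, intro sum.cong) (auto simp: one_def)
      also have "card ({..<m}-{i}-{k}) = m - 2" using that k by (simp add: card_Diff_singleton)
      ultimately show ?thesis using m3 by (simp add: of_nat_diff)
    qed
    have vk: "v k p = Av" unfolding v_def sumk Av_def gg_def c_def by simp
    have vi: "v i p = Bv" if "i < m" "i \<noteq> k" for i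
      unfolding v_def sumi[OF that] Bv_def gg_def c_def by simp
    have Bv0: "Bv \<ge> 0" using m3 by (simp add: Bv_def)
    have Av0: "Av > 0" using m3 d1 by (simp add: Av_def)
    have xnn: "\<forall>i<m. 0 \<le> x p i" and xs: "(\<Sum>i<m. x p i) \<le> 1" using feas[OF pp] by auto
    have fin: "finite {..<m}" "k \<in> {..<m}" using k by auto
    have "welfare m x v p = x p k * v k p + (\<Sum>i\<in>{..<m}-{k}. x p i * v i p)"
      unfolding welfare_def by (simp add: sum.remove[OF fin])
    also have "(\<Sum>i\<in>{..<m}-{k}. x p i * v i p) = (\<Sum>i\<in>{..<m}-{k}. x p i) * Bv"
      by (simp add: sum_distrib_right vi)
    also have "(\<Sum>i\<in>{..<m}-{k}. x p i) \<le> 1"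
    proof -
      have "(\<Sum>i<m. x p i) = x p k + (\<Sum>i\<in>{..<m}-{k}. x p i)" by (simp add: sum.remove[OF fin])
      moreover have "0 \<le> x p k" using xnn k by simp
      ultimately show ?thesis using xs by linarith
    qed
    hence "(\<Sum>i\<in>{..<m}-{k}. x p i) * Bv \<le> Bv" using mult_right_mono[OF _ Bv0] by fastforce
    hence "x p k * v k p + (\<Sum>i\<in>{..<m}-{k}. x p i) * Bv \<le> Av / real m + Bv"
      using xk vk Av0 by (auto intro!: add_mono simp: mult_right_mono divide_right_mono)
         (metis Av0 less_eq_real_def mult.commute mult_left_mono times_divide_eq_right mult.right_neutral)
    also have "Av / real m + Bv \<le> 2 / real m * Av"
    proof -
      have "real m * Bv \<le> Av" using m3 by (simp add: Av_def Bv_def d_def algebra_simps power2_eq_square)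
      then have "Bv \<le> Av / real m" using m3 by (simp add: field_simps)
      moreover have "2 / real m * Av = Av / real m + Av / real m" by (simp add: field_simps)
      ultimately show ?thesis by linarith
    qed
    also have opt: "Av \<le> opt_welfare m v p"
      unfolding opt_welfare_def using fin vk by (intro Max_ge) auto
    hence "2 / real m * Av \<le> 2 / real m * opt_welfare m v p" by (intro mult_left_mono) auto
    also have "2 / real m = 2 * sqrt (real (m^2)) / real (m^2) + 0"
      using m3 by (simp add: power2_eq_square)
    finally show ?thesis using pp opt Av0 by (intro bexI[of _ p]) auto
  qed
  show ?thesis using vv sos mech unfolding d_def by blast
qed

theorem mainTheorem4:
  shows "(\<forall>\<epsilon>::real. \<epsilon> > 0 \<longrightarrow>
           (\<exists>T v. valid_values 2 T v \<and> d_SOS 1 2 T v \<and>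
              (\<forall>x. ic_mechanism 2 T x \<longrightarrow>
                 (\<exists>s\<in>profiles 2 T. opt_welfare 2 v s > 0 \<and>
                    welfare 2 x v s \<le> (1/2 + \<epsilon>) * opt_welfare 2 v s))))
       \<and>
       (\<exists>f::nat \<Rightarrow> real. f \<longlonglongrightarrow> 0 \<and>
          (\<forall>m::nat. m \<ge> 3 \<longrightarrow>
             (\<exists>T v. valid_values m T v \<and> d_SOS (real (m^2)) m T v \<and>
                (\<forall>x. ic_mechanism m T x \<longrightarrow>
                   (\<exists>s\<in>profiles m T. opt_welfare m v s > 0 \<and>
                      welfare m x v s \<le> (2 * sqrt (real (m^2)) / real (m^2) + f m) * opt_welfare m v s)))))"
  apply (intro conjI)
  using partA apply blast
  apply (rule exI[of _ "\<lambda>_. 0"])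
  using partB by auto

end
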